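(* Let $H$ be a complex Hilbert space and let $\mathcal S(H)$ be the set of bounded self-adjoint operators on $H$, ordered by the logical order $\preceq$. Suppose that $\mathcal T \subseteq \mathcal S(H)$, $\mathcal T \neq \varnothing$, and that $B \in \mathcal S(H)$ is an upper bound of $\mathcal T$ with respect to $\preceq$. Then the operators $B\big(\bigwedge(P_A : A \in \mathcal T)\big)$ and $B\big(\bigvee(P_A : A \in \mathcal T)\big)$ belong to $\mathcal S(H)$, and (a) $B\big(\bigwedge(P_A : A \in \mathcal T)\big)$ is the greatest lower bound of $\mathcal T$ in $(\mathcal S(H),\preceq)$; (b) $B\big(\bigvee(P_A : A \in \mathcal T)\big)$ is the least upper bound of $\mathcal T$ in $(\mathcal S(H),\preceq)$.
   Context: For $A \in \mathcal S(H)$, $P_A$ denotes the orthogonal projection onto the closure of the range of $A$. The set of all orthogonal projections on $H$ is a complete lattice under the usual order ($P_1 \le P_2$ iff $P_1P_2 = P_1$); $\bigwedge$ and $\bigvee$ denote meet and join in this lattice. For $A,B \in \mathcal S(H)$, write $A \perp B$ if $AB = O$ (the zero operator). The logical order is defined by $A \preceq B$ iff $B = A + C$ for some $C \in \mathcal S(H)$ with $C \perp A$; equivalently, $A = BP_A$. Products such as $BP$ denote operator composition. *)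

theory Defs
  imports "HOL-Analysis.Analysis"
begin

class complex_vector = real_vector +
  fixes scaleC :: "complex \<Rightarrow> 'a \<Rightarrow> 'a"
  assumes scaleC_add_right: "scaleC a (x + y) = scaleC a x + scaleC a y"
    and scaleC_add_left: "scaleC (a + b) x = scaleC a x + scaleC b x"
    and scaleC_scaleC: "scaleC a (scaleC b x) = scaleC (a * b) x"
    and scaleC_one: "scaleC 1 x = x"
    and scaleR_scaleC: "scaleR r x = scaleC (complex_of_real r) x"

class complex_inner = complex_vector + real_normed_vector +
  fixes cinner :: "'a \<Rightarrow> 'a \<Rightarrow> complex"
  assumes cinner_commute: "cinner x y = cnj (cinner y x)"
    and cinner_add_right: "cinner x (y + z) = cinner x y + cinner x z"
    and cinner_scaleC_right: "cinner x (scaleC c y) = c * cinner x y"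
    and cinner_ge_zero: "0 \<le> Re (cinner x x)"
    and cinner_eq_zero_iff: "cinner x x = 0 \<longleftrightarrow> x = 0"
    and norm_eq_sqrt_cinner: "norm x = sqrt (Re (cinner x x))"

class chilbert_space = complex_inner + complete_space

definition bounded_clinear_op :: "('a::complex_inner \<Rightarrow> 'a) \<Rightarrow> bool" where
  "bounded_clinear_op A \<longleftrightarrow>
     (\<forall>x y. A (x + y) = A x + A y) \<and> (\<forall>c x. A (scaleC c x) = scaleC c (A x)) \<and>
     (\<exists>K. \<forall>x. norm (A x) \<le> norm x * K)"

definition selfadj_ops :: "('a::chilbert_space \<Rightarrow> 'a) set" where
  "selfadj_ops = {A. bounded_clinear_op A \<and> (\<forall>x y. cinner (A x) y = cinner x (A y))}"

definition is_oproj :: "('a::chilbert_space \<Rightarrow> 'a) \<Rightarrow> bool" where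
  "is_oproj P \<longleftrightarrow> P \<in> selfadj_ops \<and> P \<circ> P = P"

definition proj_le :: "('a::chilbert_space \<Rightarrow> 'a) \<Rightarrow> ('a \<Rightarrow> 'a) \<Rightarrow> bool" where
  "proj_le P1 P2 \<longleftrightarrow> P1 \<circ> P2 = P1"

definition range_proj :: "('a::chilbert_space \<Rightarrow> 'a) \<Rightarrow> ('a \<Rightarrow> 'a)" where
  "range_proj A = (THE P. is_oproj P \<and> range P = closure (range A))"

definition proj_Inf :: "('a::chilbert_space \<Rightarrow> 'a) set \<Rightarrow> ('a \<Rightarrow> 'a)" where
  "proj_Inf \<P> = (THE P. is_oproj P \<and> (\<forall>Q\<in>\<P>. proj_le P Q) \<and>
      (\<forall>R. is_oproj R \<and> (\<forall>Q\<in>\<P>. proj_le R Q) \<longrightarrow> proj_le R P))"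

definition proj_Sup :: "('a::chilbert_space \<Rightarrow> 'a) set \<Rightarrow> ('a \<Rightarrow> 'a)" where
  "proj_Sup \<P> = (THE P. is_oproj P \<and> (\<forall>Q\<in>\<P>. proj_le Q P) \<and>
      (\<forall>R. is_oproj R \<and> (\<forall>Q\<in>\<P>. proj_le Q R) \<longrightarrow> proj_le P R))"

definition log_le :: "('a::chilbert_space \<Rightarrow> 'a) \<Rightarrow> ('a \<Rightarrow> 'a) \<Rightarrow> bool" where
  "log_le A B \<longleftrightarrow> (\<exists>C\<in>selfadj_ops. C \<circ> A = (\<lambda>_. 0) \<and> B = (\<lambda>x. A x + C x))"

definition is_log_glb :: "('a::chilbert_space \<Rightarrow> 'a) set \<Rightarrow> ('a \<Rightarrow> 'a) \<Rightarrow> bool" where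
  "is_log_glb T G \<longleftrightarrow> G \<in> selfadj_ops \<and> (\<forall>A\<in>T. log_le G A) \<and>
     (\<forall>L\<in>selfadj_ops. (\<forall>A\<in>T. log_le L A) \<longrightarrow> log_le L G)"

definition is_log_lub :: "('a::chilbert_space \<Rightarrow> 'a) set \<Rightarrow> ('a \<Rightarrow> 'a) \<Rightarrow> bool" where
  "is_log_lub T U \<longleftrightarrow> U \<in> selfadj_ops \<and> (\<forall>A\<in>T. log_le A U) \<and>
     (\<forall>L\<in>selfadj_ops. (\<forall>A\<in>T. log_le A L) \<longrightarrow> log_le U L)"

end

theory Submission
  imports Defs
begin


lemma scaleC_zero_right[simp]: "scaleC a (0::'a::complex_vector) = 0"
  by (metis add_cancel_left_right scaleC_add_right)
lemma scaleC_zero_left[simp]: "scaleC 0 (x::'a::complex_vector) = 0"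
  by (metis add_cancel_left_right add.right_neutral scaleC_add_left)
lemma scaleC_minus_right: "scaleC a (- x::'a::complex_vector) = - scaleC a x"
  by (metis add.right_inverse add_eq_0_iff scaleC_add_right scaleC_zero_right)
lemma scaleC_diff_right: "scaleC a (x - y::'a::complex_vector) = scaleC a x - scaleC a y"
  by (metis diff_conv_add_uminus scaleC_add_right scaleC_minus_right)
lemma scaleC_minus_left: "scaleC (- a) (x::'a::complex_vector) = - scaleC a x"
  by (metis add.right_inverse add_eq_0_iff scaleC_add_left scaleC_zero_left)

lemma cinner_add_left: "cinner (x + y) (z::'a::complex_inner) = cinner x z + cinner y z"
  by (metis cinner_add_right cinner_commute complex_cnj_add)
lemma cinner_zero_right[simp]: "cinner (x::'a::complex_inner) 0 = 0"
  by (metis add_cancel_left_right cinner_add_right)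
lemma cinner_zero_left[simp]: "cinner 0 (x::'a::complex_inner) = 0"
  by (metis add_cancel_left_right cinner_add_left)
lemma cinner_minus_right: "cinner (x::'a::complex_inner) (- y) = - cinner x y"
  by (metis add.right_inverse add_eq_0_iff cinner_add_right cinner_zero_right)
lemma cinner_minus_left: "cinner (- x::'a::complex_inner) y = - cinner x y"
  by (metis add.right_inverse add_eq_0_iff cinner_add_left cinner_zero_left)
lemma cinner_diff_right: "cinner (x::'a::complex_inner) (y - z) = cinner x y - cinner x z"
  using cinner_add_right[of x y "- z"] by (simp add: cinner_minus_right)
lemma cinner_diff_left: "cinner (x - y::'a::complex_inner) z = cinner x z - cinner y z"
  using cinner_add_left[of x "- y" z] by (simp add: cinner_minus_left)
lemma cinner_scaleC_left: "cinner (scaleC c x::'a::complex_inner) y = cnj c * cinner x y"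
  by (metis cinner_commute cinner_scaleC_right complex_cnj_cnj complex_cnj_mult)

lemma cinner_self: "cinner (x::'a::complex_inner) x = complex_of_real ((norm x)^2)"
proof -
  have "Im (cinner x x) = 0" by (metis cinner_commute complex_cnj_cancel_iff complex_is_Real_iff Reals_cnj_iff)
  moreover have "Re (cinner x x) = (norm x)^2" using cinner_ge_zero[of x] by (simp add: norm_eq_sqrt_cinner)
  ultimately show ?thesis by (simp add: complex_eq_iff)
qed

lemma cinner_ext: assumes "\<And>z. cinner (x::'a::complex_inner) z = cinner y z" shows "x = y"
proof -
  have "cinner (x - y) (x - y) = 0" by (simp add: cinner_diff_left assms)
  hence "x - y = 0" by (simp only: cinner_eq_zero_iff)
  thus ?thesis by simp
qed

lemma norm_scaleC: "norm (scaleC c (x::'a::complex_inner)) = cmod c * norm x"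
proof -
  have "cinner (scaleC c x) (scaleC c x) = (c * cnj c) * cinner x x"
    by (simp add: cinner_scaleC_left cinner_scaleC_right)
  also have "\<dots> = complex_of_real ((cmod c)^2) * complex_of_real ((norm x)^2)"
    by (simp only: cinner_self complex_norm_square)
  finally have "cinner (scaleC c x) (scaleC c x) = complex_of_real ((cmod c)^2 * (norm x)^2)"
    by simp
  hence "complex_of_real ((norm (scaleC c x))^2) = complex_of_real (((cmod c) * norm x)^2)"
    by (simp only: cinner_self power_mult_distrib)
  hence "(norm (scaleC c x))^2 = ((cmod c) * norm x)^2" using of_real_eq_iff by blast
  thus ?thesis by (simp add: power2_eq_iff_nonneg)
qed

lemma norm_add_sq: "(norm (x + y::'a::complex_inner))^2 = (norm x)^2 + (norm y)^2 + 2 * Re (cinner x y)"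
proof -
  have "cinner (x+y) (x+y) = cinner x x + cinner y y + (cinner x y + cnj (cinner x y))"
    by (simp add: cinner_add_left cinner_add_right cinner_commute[of y x])
  hence "Re (cinner (x+y) (x+y)) = Re (cinner x x) + Re (cinner y y) + 2 * Re (cinner x y)" by simp
  thus ?thesis by (simp add: cinner_self)
qed

lemma bounded_linear_scaleC: "bounded_linear (scaleC c :: 'a::complex_inner \<Rightarrow> 'a)"
proof
  fix x y :: 'a and r :: real
  show "scaleC c (x + y) = scaleC c x + scaleC c y" by (rule scaleC_add_right)
  show "scaleC c (scaleR r x) = scaleR r (scaleC c x)"
    by (simp add: scaleR_scaleC scaleC_scaleC mult.commute)
  show "\<exists>K. \<forall>x::'a. norm (scaleC c x) \<le> norm x * K"
    by (rule exI[of _ "cmod c"]) (simp add: norm_scaleC mult.commute)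
qed

lemma bclop_bounded_linear: "bounded_clinear_op A \<Longrightarrow> bounded_linear A"
proof -
  assume h: "bounded_clinear_op A"
  have a: "A (x + y) = A x + A y" for x y using h unfolding bounded_clinear_op_def by blast
  have c: "A (scaleC c x) = scaleC c (A x)" for c x using h unfolding bounded_clinear_op_def by blast
  obtain K where K: "\<And>x. norm (A x) \<le> norm x * K" using h unfolding bounded_clinear_op_def by blast
  have r: "A (scaleR r x) = scaleR r (A x)" for r x by (metis c scaleR_scaleC)
  show ?thesis by (rule bounded_linear_intro[OF a r K])
qed


definition csub :: "'a::complex_vector set \<Rightarrow> bool" where
  "csub M \<longleftrightarrow> 0 \<in> M \<and> (\<forall>x\<in>M. \<forall>y\<in>M. x + y \<in> M) \<and> (\<forall>c. \<forall>x\<in>M. scaleC c x \<in> M)"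

lemma csub_0: "csub M \<Longrightarrow> 0 \<in> M" by (simp add: csub_def)
lemma csub_add: "csub M \<Longrightarrow> x \<in> M \<Longrightarrow> y \<in> M \<Longrightarrow> x + y \<in> M" by (simp add: csub_def)
lemma csub_scaleC: "csub M \<Longrightarrow> x \<in> M \<Longrightarrow> scaleC c x \<in> M" by (simp add: csub_def)
lemma csub_scaleR: "csub M \<Longrightarrow> x \<in> M \<Longrightarrow> scaleR r x \<in> M" by (simp add: csub_def scaleR_scaleC)
lemma csub_minus: "csub M \<Longrightarrow> x \<in> M \<Longrightarrow> - x \<in> M"
  by (metis csub_scaleC scaleC_minus_left scaleC_one)
lemma csub_diff: "csub M \<Longrightarrow> x \<in> M \<Longrightarrow> y \<in> M \<Longrightarrow> x - y \<in> M"
  by (metis csub_add csub_minus diff_conv_add_uminus)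

lemma orth_step:
  fixes z y :: "'a::complex_inner"
  assumes minim: "\<And>t. (norm z)^2 \<le> (norm (z + - scaleC t y))^2"
  shows "cinner z y = 0"
proof -
    define c where "c = cinner z y"
    have np: "(norm y)^2 + 1 > 0" using zero_le_power2[of "norm y"] by linarith
    define s where "s = 1 / ((norm y)^2 + 1)"
    have s0: "s > 0" unfolding s_def using np by simp
    have "s * (norm y)^2 = (norm y)^2 / ((norm y)^2 + 1)" by (simp add: s_def)
    also have "\<dots> < 1" using np by (simp add: divide_less_eq)
    finally have sy: "s * (norm y)^2 < 1" .
    define t where "t = complex_of_real s * cnj c"
    have E1: "(norm z)^2 \<le> (norm z)^2 + (norm (scaleC t y))^2 + 2 * Re (cinner z (- scaleC t y))"
      using minim[of t] norm_add_sq[of z "- scaleC t y"] norm_minus_cancel[of "scaleC t y"] by (simp only:)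
    have E2: "cinner z (- scaleC t y) = - (t * c)"
      by (simp add: cinner_minus_right cinner_scaleC_right c_def)
    have cc: "cnj c * c = complex_of_real ((cmod c)^2)" by (metis complex_norm_square mult.commute)
    have "t * c = complex_of_real s * (cnj c * c)" by (simp add: t_def mult.assoc)
    also have "\<dots> = complex_of_real (s * (cmod c)^2)" using cc by simp
    finally have E3: "Re (t * c) = s * (cmod c)^2" by simp
    have E4: "norm (scaleC t y) = s * cmod c * norm y"
      unfolding t_def norm_scaleC using s0 by (simp add: norm_mult)
    have key: "0 \<le> (s * cmod c * norm y)^2 - 2 * (s * (cmod c)^2)"
      using E1 E2 E3 E4 by simp
    have "(s * cmod c * norm y)^2 - 2 * (s * (cmod c)^2) = (s * (cmod c)^2) * (s * (norm y)^2 - 2)"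
      by (simp add: power2_eq_square algebra_simps)
    with key have k2: "0 \<le> (s * (cmod c)^2) * (s * (norm y)^2 - 2)" by simp
    show "cinner z y = 0"
    proof (rule ccontr)
      assume "cinner z y \<noteq> 0"
      hence "cmod c > 0" by (simp add: c_def)
      hence "s * (cmod c)^2 > 0" using s0 by simp
      moreover have "s * (norm y)^2 - 2 < 0" using sy by simp
      ultimately have "(s * (cmod c)^2) * (s * (norm y)^2 - 2) < 0" by (rule mult_pos_neg)
      thus False using k2 by simp
    qed
qed

lemma proj_exists:
  fixes M :: "'a::chilbert_space set"
  assumes sub: "csub M" and cl: "closed M"
  shows "\<exists>m\<in>M. \<forall>y\<in>M. cinner (x - m) y = 0"
proof -
  define D where "D = (\<lambda>m. (norm (x - m))^2) ` M"
  define d where "d = Inf D"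
  have Dne: "D \<noteq> {}" using csub_0[OF sub] D_def by auto
  have Dbd: "bdd_below D" unfolding D_def by (rule bdd_belowI[of _ 0]) auto
  have dle: "d \<le> (norm (x - m))^2" if "m \<in> M" for m
    unfolding d_def D_def using Dbd D_def that by (auto intro: cInf_lower)
  have "\<exists>m\<in>M. (norm (x - m))^2 < d + 1 / (real n + 1)" for n
  proof -
    have "Inf D < d + 1 / (real n + 1)" unfolding d_def by simp
    from cInf_lessD[OF Dne this] show ?thesis unfolding D_def by auto
  qed
  then obtain f where f: "\<And>n. f n \<in> M" "\<And>n. (norm (x - f n))^2 < d + 1 / (real n + 1)"
    by metis
  have para: "(norm (f i - f j))^2 \<le> 2 / (real i + 1) + 2 / (real j + 1)" for i j
  proof -
    define u where "u = x - f i"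
    define v where "v = x - f j"
    define w where "w = scaleR (1/2) (f i + f j)"
    have wM: "w \<in> M" unfolding w_def using f(1) sub by (simp add: csub_add csub_scaleR)
    have uv: "u + v = scaleR 2 (x - w)" unfolding u_def v_def w_def by (simp add: algebra_simps scaleR_2)
    have "(norm (u + v))^2 = 4 * (norm (x - w))^2" unfolding uv by (simp add: power_mult_distrib)
    hence h1: "(norm (u + v))^2 \<ge> 4 * d" using dle[OF wM] by simp
    have h2: "(norm (u + v))^2 + (norm (u - v))^2 = 2 * (norm u)^2 + 2 * (norm v)^2"
      using norm_add_sq[of u v] norm_add_sq[of u "-v"]
      by (simp add: cinner_minus_right)
    have "u - v = f j - f i" unfolding u_def v_def by simp
    hence "norm (f i - f j) = norm (u - v)" by (simp add: norm_minus_commute)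
    moreover have "(norm u)^2 < d + 1 / (real i + 1)" "(norm v)^2 < d + 1 / (real j + 1)"
      using f(2) u_def v_def by auto
    ultimately show ?thesis using h1 h2 by simp
  qed
  have "Cauchy f"
  proof (rule metric_CauchyI)
    fix e :: real assume e: "e > 0"
    obtain N :: nat where N: "4 / (e^2) < real N" using reals_Archimedean2 by blast
    have NN: "4 / (real N + 1) < e^2"
    proof -
      have "4 / e^2 < real N + 1" using N by simp
      hence "4 < (real N + 1) * e^2" using e by (simp add: field_simps)
      thus ?thesis by (simp add: field_simps)
    qed
    show "\<exists>M. \<forall>m\<ge>M. \<forall>n\<ge>M. dist (f m) (f n) < e"
    proof (intro exI allI impI)
      fix m n assume mn: "N \<le> m" "N \<le> n"
      have "2 / (real m + 1) \<le> 2 / (real N + 1)" "2 / (real n + 1) \<le> 2 / (real N + 1)"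
        using mn by (auto intro!: divide_left_mono)
      hence "(norm (f m - f n))^2 < e^2" using para[of m n] NN by simp
      hence "norm (f m - f n) < e" using e by (simp add: power_less_imp_less_base)
      thus "dist (f m) (f n) < e" by (simp add: dist_norm)
    qed
  qed
  then obtain m where lim: "f \<longlonglongrightarrow> m" using Cauchy_convergent_iff convergent_def by blast
  have mM: "m \<in> M" using closed_sequentially[OF cl f(1) lim] .
  have "(\<lambda>n. (norm (x - f n))^2) \<longlonglongrightarrow> (norm (x - m))^2"
    by (intro tendsto_intros lim)
  moreover have "(\<lambda>n. d + 1 / (real n + 1)) \<longlonglongrightarrow> d + 0"
  proof -
    have "(\<lambda>n. 1 / (real n + 1)) \<longlonglongrightarrow> 0"
      using LIMSEQ_inverse_real_of_nat by (simp add: inverse_eq_divide add.commute)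
    thus ?thesis by (intro tendsto_intros)
  qed
  ultimately have "(norm (x - m))^2 \<le> d + 0"
    using f(2) by (intro LIMSEQ_le) (auto intro: less_imp_le)
  hence minim: "(norm (x - m))^2 \<le> (norm (x - m'))^2" if "m' \<in> M" for m'
    using dle[OF that] by linarith
  show ?thesis
  proof (intro bexI[OF _ mM] ballI)
    fix y assume yM: "y \<in> M"
    show "cinner (x - m) y = 0"
    proof (rule orth_step)
      fix t
      have "m + scaleC t y \<in> M" using mM yM sub by (simp add: csub_add csub_scaleC)
      from minim[OF this] show "(norm (x - m))^2 \<le> (norm (x - m + - scaleC t y))^2"
        by (simp add: algebra_simps)
    qed
  qed
qed

definition cproj :: "'a::chilbert_space set \<Rightarrow> 'a \<Rightarrow> 'a" where
  "cproj M x = (THE m. m \<in> M \<and> (\<forall>y\<in>M. cinner (x - m) y = 0))"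

lemma orth_unique:
  fixes M :: "'a::complex_inner set"
  assumes "csub M" "m \<in> M" "\<forall>y\<in>M. cinner (x - m) y = 0" "m' \<in> M" "\<forall>y\<in>M. cinner (x - m') y = 0"
  shows "m = m'"
proof -
  have d: "m' - m \<in> M" using assms by (simp add: csub_diff)
  have "m' - m = (x - m) - (x - m')" by simp
  hence "cinner (m' - m) (m' - m) = cinner (x - m) (m' - m) - cinner (x - m') (m' - m)"
    by (metis cinner_diff_left)
  also have "\<dots> = 0" using assms d by simp
  finally have "m' - m = 0" by (simp only: cinner_eq_zero_iff)
  thus ?thesis by simp
qed

lemma cproj_unique:
  fixes M :: "'a::chilbert_space set"
  assumes "csub M" "m \<in> M" "\<forall>y\<in>M. cinner (x - m) y = 0"
  shows "cproj M x = m"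
  unfolding cproj_def
  apply (rule the_equality)
  using assms orth_unique[OF assms(1)] by blast+

lemma cproj_char:
  fixes M :: "'a::chilbert_space set"
  assumes "csub M" "closed M"
  shows "cproj M x \<in> M \<and> (\<forall>y\<in>M. cinner (x - cproj M x) y = 0)"
proof -
  obtain m where "m \<in> M" "\<forall>y\<in>M. cinner (x - m) y = 0" using proj_exists[OF assms] by blast
  thus ?thesis using cproj_unique[OF assms(1)] by simp
qed

lemma cproj_props:
  fixes M :: "'a::chilbert_space set"
  assumes S: "csub M" and Cl: "closed M"
  shows "is_oproj (cproj M)" "range (cproj M) = M"
proof -
  let ?p = "cproj M"
  have inM: "?p x \<in> M" for x using cproj_char[OF S Cl] by blast
  have orth: "cinner (x - ?p x) y = 0" if "y \<in> M" for x y using cproj_char[OF S Cl] that by blast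
  have orth2: "cinner y (x - ?p x) = 0" if "y \<in> M" for x y
    using orth[OF that, of x] by (metis cinner_commute complex_cnj_zero)
  have add: "?p (x + y) = ?p x + ?p y" for x y
  proof (rule cproj_unique[OF S])
    show "?p x + ?p y \<in> M" using inM S by (simp add: csub_add)
    have e: "x + y - (?p x + ?p y) = (x - ?p x) + (y - ?p y)" by (simp add: algebra_simps)
    show "\<forall>z\<in>M. cinner (x + y - (?p x + ?p y)) z = 0"
      unfolding e using orth by (simp add: cinner_add_left)
  qed
  have sc: "?p (scaleC c x) = scaleC c (?p x)" for c x
  proof -
    have "cinner (scaleC c x - scaleC c (?p x)) y = 0" if "y \<in> M" for y
      using orth[OF that, of x] by (metis cinner_scaleC_left mult_zero_right scaleC_diff_right)
    thus ?thesis using cproj_unique[OF S] inM S csub_scaleC by blast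
  qed
  have bd: "norm (?p x) \<le> norm x * 1" for x
  proof -
    have "(norm x)^2 = (norm (?p x))^2 + (norm (x - ?p x))^2"
      using norm_add_sq[of "?p x" "x - ?p x"] orth2[OF inM, of x x] by simp
    hence "(norm (?p x))^2 \<le> (norm x)^2" using zero_le_power2[of "norm (x - ?p x)"] by linarith
    thus ?thesis using power2_le_imp_le by fastforce
  qed
  have sa: "cinner (?p x) y = cinner x (?p y)" for x y
  proof -
    have 1: "cinner (?p x) y = cinner (?p x) (?p y)"
      using cinner_diff_right[of "?p x" y "?p y"] orth2[OF inM[of x], of y] by simp
    have 2: "cinner x (?p y) = cinner (?p x) (?p y)"
      using cinner_diff_left[of x "?p x" "?p y"] orth[OF inM[of y], of x] by simp
    show ?thesis using 1 2 by simp
  qed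
  have fix_: "?p m = m" if "m \<in> M" for m using cproj_unique[OF S that] by simp
  have bc: "bounded_clinear_op ?p" unfolding bounded_clinear_op_def using add sc bd by blast
  have saop: "?p \<in> selfadj_ops" unfolding selfadj_ops_def using bc sa by blast
  have idem: "?p \<circ> ?p = ?p" using fix_ inM by (simp add: fun_eq_iff)
  show "is_oproj ?p" unfolding is_oproj_def using saop idem by blast
  show "range ?p = M" using inM fix_ by (metis image_subsetI subsetI subset_antisym rangeI)
qed

lemma sa_sym: "A \<in> selfadj_ops \<Longrightarrow> cinner (A x) y = cinner x (A y)"
  by (simp add: selfadj_ops_def)
lemma sa_bl: "A \<in> selfadj_ops \<Longrightarrow> bounded_linear A"
  by (simp add: selfadj_ops_def bclop_bounded_linear)
lemma sa_bclop: "A \<in> selfadj_ops \<Longrightarrow> bounded_clinear_op A"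
  by (simp add: selfadj_ops_def)
lemma oproj_sa: "is_oproj P \<Longrightarrow> P \<in> selfadj_ops" by (simp add: is_oproj_def)
lemma oproj_idem: "is_oproj P \<Longrightarrow> P (P x) = P x" by (simp add: is_oproj_def fun_eq_iff)

lemma bclop_csub_range: "bounded_clinear_op A \<Longrightarrow> csub (range A)"
  unfolding csub_def bounded_clinear_op_def
  by (metis (no_types, lifting) add_cancel_right_right rangeE rangeI)


lemma oproj_range_fix: "is_oproj P \<Longrightarrow> y \<in> range P \<longleftrightarrow> P y = y"
  using oproj_idem by (metis rangeE rangeI)

lemma oproj_range_closed: "is_oproj P \<Longrightarrow> closed (range P)"
proof -
  assume P: "is_oproj P"
  have r: "range P = {x. P x = x}" using oproj_range_fix[OF P] by auto
  have "continuous_on UNIV P" using sa_bl[OF oproj_sa[OF P]] by (rule linear_continuous_on)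
  hence "closed {x. P x = x}" by (rule closed_Collect_eq[OF _ continuous_on_id])
  thus ?thesis unfolding r .
qed

lemma oproj_csub: "is_oproj P \<Longrightarrow> csub (range P)"
  using bclop_csub_range oproj_sa sa_bclop by blast

lemma oproj_is_cproj: "is_oproj P \<Longrightarrow> P = cproj (range P)"
proof
  fix x assume P: "is_oproj P"
  have "cinner (x - P x) y = 0" if "y \<in> range P" for y
  proof -
    obtain z where y: "y = P z" using \<open>y \<in> range P\<close> by blast
    have "cinner (x - P x) (P z) = cinner (P x - P (P x)) z"
      using sa_sym[OF oproj_sa[OF P]] linear_diff[OF bounded_linear.linear[OF sa_bl[OF oproj_sa[OF P]]]]
      by metis
    thus ?thesis using y oproj_idem[OF P] by simp
  qed
  thus "P x = cproj (range P) x" using cproj_unique[OF oproj_csub[OF P]] by (metis rangeI)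
qed

lemma oproj_unique_range: "is_oproj P \<Longrightarrow> is_oproj Q \<Longrightarrow> range P = range Q \<Longrightarrow> P = Q"
  using oproj_is_cproj by metis

lemma proj_le_iff:
  assumes P: "is_oproj P" and Q: "is_oproj Q"
  shows "proj_le P Q \<longleftrightarrow> range P \<subseteq> range Q"
proof
  assume "proj_le P Q"
  hence PQ: "P (Q x) = P x" for x by (simp add: proj_le_def fun_eq_iff)
  have "Q (P x) = P x" for x
  proof (rule cinner_ext)
    fix y
    show "cinner (Q (P x)) y = cinner (P x) y"
      using sa_sym[OF oproj_sa[OF P]] sa_sym[OF oproj_sa[OF Q]] PQ by metis
  qed
  thus "range P \<subseteq> range Q" by (metis rangeI image_subsetI)
next
  assume sub: "range P \<subseteq> range Q"
  have QP: "Q (P x) = P x" for x using sub oproj_range_fix[OF Q] by blast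
  have "P (Q x) = P x" for x
  proof (rule cinner_ext)
    fix y
    show "cinner (P (Q x)) y = cinner (P x) y"
      using sa_sym[OF oproj_sa[OF P]] sa_sym[OF oproj_sa[OF Q]] QP by metis
  qed
  thus "proj_le P Q" by (simp add: proj_le_def fun_eq_iff)
qed


lemma csub_closure:
  fixes S :: "'a::complex_inner set"
  assumes S: "csub S" shows "csub (closure S)"
  unfolding csub_def
proof (intro conjI ballI allI)
  show "0 \<in> closure S" using csub_0[OF S] closure_subset by blast
next
  fix x y assume x: "x \<in> closure S" and y: "y \<in> closure S"
  obtain f where f: "\<forall>n. f n \<in> S" "f \<longlonglongrightarrow> x" using x closure_sequential by blast
  obtain g where g: "\<forall>n. g n \<in> S" "g \<longlonglongrightarrow> y" using y closure_sequential by blast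
  have 1: "\<forall>n. f n + g n \<in> S" using f g S csub_add by blast
  have 2: "(\<lambda>n. f n + g n) \<longlonglongrightarrow> x + y" using f g by (intro tendsto_add) auto
  have "\<exists>h. (\<forall>n. h n \<in> S) \<and> h \<longlonglongrightarrow> x + y"
    by (rule exI[where x="\<lambda>n. f n + g n"], rule conjI, rule 1, rule 2)
  thus "x + y \<in> closure S" by (simp only: closure_sequential)
next
  fix c and x assume x: "x \<in> closure S"
  have "scaleC c ` closure S \<subseteq> closure S"
    apply (rule image_closure_subset)
      apply (rule linear_continuous_on[OF bounded_linear_scaleC])
     apply simp
    using S csub_scaleC closure_subset by blast
  thus "scaleC c x \<in> closure S" using x by blast
qed

lemma closed_eq_set: "bounded_linear (A::'a::real_normed_vector \<Rightarrow> 'b::real_normed_vector) \<Longrightarrow> bounded_linear B \<Longrightarrow> closed {x. A x = B x}"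
  by (intro closed_Collect_eq linear_continuous_on)

lemma csub_eq_set: "bounded_clinear_op A \<Longrightarrow> bounded_clinear_op B \<Longrightarrow> csub {x. A x = B x}"
  unfolding csub_def bounded_clinear_op_def
  by (metis (mono_tags, lifting) add_cancel_right_right mem_Collect_eq scaleC_zero_right)

lemma csub_vimage: "bounded_clinear_op B \<Longrightarrow> csub M \<Longrightarrow> csub {x. B x \<in> M}"
  unfolding csub_def bounded_clinear_op_def
  by (metis (mono_tags, lifting) add_cancel_right_right mem_Collect_eq)

lemma closed_vimage_bl: "bounded_linear B \<Longrightarrow> closed M \<Longrightarrow> closed {x. B x \<in> M}"
proof -
  assume "bounded_linear B" "closed M"
  hence "closed (B -` M)" by (intro closed_vimage linear_continuous_on)
  thus ?thesis by (simp add: vimage_def)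
qed

lemma range_proj_props:
  fixes A :: "'a::chilbert_space \<Rightarrow> 'a"
  assumes A: "A \<in> selfadj_ops"
  shows "is_oproj (range_proj A)" "range (range_proj A) = closure (range A)"
proof -
  let ?M = "closure (range A)"
  have S: "csub ?M" using csub_closure bclop_csub_range sa_bclop[OF A] by blast
  have e: "range_proj A = cproj ?M"
    unfolding range_proj_def
    apply (rule the_equality)
    using cproj_props[OF S closed_closure] oproj_is_cproj by metis+
  show "is_oproj (range_proj A)" "range (range_proj A) = closure (range A)"
    using e cproj_props[OF S closed_closure] by auto
qed

lemma range_proj_comp:
  fixes A :: "'a::chilbert_space \<Rightarrow> 'a"
  assumes A: "A \<in> selfadj_ops"
  shows "range_proj A (A x) = A x" "A (range_proj A x) = A x"
proof -
  let ?P = "range_proj A"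
  note pp = range_proj_props[OF A]
  have fx: "?P (A y) = A y" for y
  proof -
    have "A y \<in> closure (range A)" by (meson closure_subset rangeI subsetD)
    hence "A y \<in> range ?P" using pp(2) by simp
    thus ?thesis using oproj_range_fix[OF pp(1)] by blast
  qed
  thus "?P (A x) = A x" .
  show "A (?P x) = A x"
  proof (rule cinner_ext)
    fix y
    have "cinner (A (?P x)) y = cinner x (?P (A y))"
      using sa_sym[OF A, of "?P x" y] sa_sym[OF oproj_sa[OF pp(1)], of x "A y"] by simp
    thus "cinner (A (?P x)) y = cinner (A x) y" using fx sa_sym[OF A] by simp
  qed
qed

lemma csub_Inter: "(\<And>N. N \<in> NN \<Longrightarrow> csub N) \<Longrightarrow> csub (\<Inter>NN)"
  unfolding csub_def by blast

lemma proj_Inf_props: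
  fixes S :: "('a::chilbert_space \<Rightarrow> 'a) set"
  assumes S: "\<forall>Q\<in>S. is_oproj Q"
  shows "is_oproj (proj_Inf S)" "range (proj_Inf S) = (\<Inter>Q\<in>S. range Q)"
proof -
  let ?M = "\<Inter>Q\<in>S. range Q"
  have sub: "csub ?M" using S oproj_csub by (intro csub_Inter) blast
  have cl: "closed ?M" using S oproj_range_closed by (intro closed_INT) blast
  note cp = cproj_props[OF sub cl]
  have le1: "proj_le (cproj ?M) Q" if Q: "Q \<in> S" for Q
  proof -
    have "?M \<subseteq> range Q" using Q by (rule INT_lower)
    hence "range (cproj ?M) \<subseteq> range Q" by (simp only: cp(2))
    thus ?thesis by (simp only: proj_le_iff[OF cp(1) bspec[OF S Q]])
  qed
  have rl: "range R \<subseteq> ?M" if R1: "is_oproj R" and R2: "\<forall>Q\<in>S. proj_le R Q" for R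
  proof (rule INT_greatest)
    fix Q assume Q: "Q \<in> S"
    show "range R \<subseteq> range Q" using bspec[OF R2 Q] by (simp only: proj_le_iff[OF R1 bspec[OF S Q]])
  qed
  have ub: "proj_le R (cproj ?M)" if R1: "is_oproj R" and R2: "\<forall>Q\<in>S. proj_le R Q" for R
  proof -
    have "range R \<subseteq> range (cproj ?M)" unfolding cp(2) by (rule rl[OF R1 R2])
    thus ?thesis by (simp only: proj_le_iff[OF R1 cp(1)])
  qed
  have e: "proj_Inf S = cproj ?M"
    unfolding proj_Inf_def
  proof (rule the_equality)
    show "is_oproj (cproj ?M) \<and> (\<forall>Q\<in>S. proj_le (cproj ?M) Q) \<and>
      (\<forall>R. is_oproj R \<and> (\<forall>Q\<in>S. proj_le R Q) \<longrightarrow> proj_le R (cproj ?M))"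
      using cp(1) le1 ub by blast
  next
    fix P assume P: "is_oproj P \<and> (\<forall>Q\<in>S. proj_le P Q) \<and>
      (\<forall>R. is_oproj R \<and> (\<forall>Q\<in>S. proj_le R Q) \<longrightarrow> proj_le R P)"
    have P1: "is_oproj P" and P2: "\<forall>Q\<in>S. proj_le P Q"
      and P3: "\<And>R. is_oproj R \<Longrightarrow> \<forall>Q\<in>S. proj_le R Q \<Longrightarrow> proj_le R P" using P by auto
    have 1: "range P \<subseteq> range (cproj ?M)" unfolding cp(2) by (rule rl[OF P1 P2])
    have "proj_le (cproj ?M) P" using le1 by (intro P3 cp(1)) blast
    hence 2: "range (cproj ?M) \<subseteq> range P" by (simp only: proj_le_iff[OF cp(1) P1])
    have "range P = range (cproj ?M)" using 1 2 by (rule subset_antisym)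
    thus "P = cproj ?M" by (rule oproj_unique_range[OF P1 cp(1)])
  qed
  show "is_oproj (proj_Inf S)" "range (proj_Inf S) = ?M" using e cp by auto
qed

lemma proj_Sup_props:
  fixes S :: "('a::chilbert_space \<Rightarrow> 'a) set"
  assumes S: "\<forall>Q\<in>S. is_oproj Q"
  shows "is_oproj (proj_Sup S)" "range (proj_Sup S) = \<Inter>{N. csub N \<and> closed N \<and> (\<forall>Q\<in>S. range Q \<subseteq> N)}"
proof -
  let ?M = "\<Inter>{N. csub N \<and> closed N \<and> (\<forall>Q\<in>S. range Q \<subseteq> N)}"
  have sub: "csub ?M" by (intro csub_Inter) blast
  have cl: "closed ?M" by (intro closed_Inter) blast
  have low: "range Q \<subseteq> ?M" if "Q \<in> S" for Q using that by blast
  have least: "?M \<subseteq> range R" if R1: "is_oproj R" and R2: "\<forall>Q\<in>S. range Q \<subseteq> range R" for R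
  proof (rule Inter_lower)
    show "range R \<in> {N. csub N \<and> closed N \<and> (\<forall>Q\<in>S. range Q \<subseteq> N)}"
      using oproj_csub[OF R1] oproj_range_closed[OF R1] R2 by blast
  qed
  note cp = cproj_props[OF sub cl]
  have le1: "proj_le Q (cproj ?M)" if Q: "Q \<in> S" for Q
  proof -
    have "range Q \<subseteq> range (cproj ?M)" unfolding cp(2) by (rule low[OF Q])
    thus ?thesis by (simp only: proj_le_iff[OF bspec[OF S Q] cp(1)])
  qed
  have rl: "?M \<subseteq> range R" if R1: "is_oproj R" and R2: "\<forall>Q\<in>S. proj_le Q R" for R
  proof (rule least[OF R1], rule ballI)
    fix Q assume Q: "Q \<in> S"
    show "range Q \<subseteq> range R" using bspec[OF R2 Q] by (simp only: proj_le_iff[OF bspec[OF S Q] R1])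
  qed
  have ub: "proj_le (cproj ?M) R" if R1: "is_oproj R" and R2: "\<forall>Q\<in>S. proj_le Q R" for R
  proof -
    have "range (cproj ?M) \<subseteq> range R" unfolding cp(2) by (rule rl[OF R1 R2])
    thus ?thesis by (simp only: proj_le_iff[OF cp(1) R1])
  qed
  have e: "proj_Sup S = cproj ?M"
    unfolding proj_Sup_def
  proof (rule the_equality)
    show "is_oproj (cproj ?M) \<and> (\<forall>Q\<in>S. proj_le Q (cproj ?M)) \<and>
      (\<forall>R. is_oproj R \<and> (\<forall>Q\<in>S. proj_le Q R) \<longrightarrow> proj_le (cproj ?M) R)"
      using cp(1) le1 ub by blast
  next
    fix P assume P: "is_oproj P \<and> (\<forall>Q\<in>S. proj_le Q P) \<and>
      (\<forall>R. is_oproj R \<and> (\<forall>Q\<in>S. proj_le Q R) \<longrightarrow> proj_le P R)"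
    have P1: "is_oproj P" and P2: "\<forall>Q\<in>S. proj_le Q P"
      and P3: "\<And>R. is_oproj R \<Longrightarrow> \<forall>Q\<in>S. proj_le Q R \<Longrightarrow> proj_le P R" using P by auto
    have 1: "range (cproj ?M) \<subseteq> range P" unfolding cp(2) by (rule rl[OF P1 P2])
    have "proj_le P (cproj ?M)" using le1 by (intro P3 cp(1)) blast
    hence 2: "range P \<subseteq> range (cproj ?M)" by (simp only: proj_le_iff[OF P1 cp(1)])
    have "range P = range (cproj ?M)" using 2 1 by (rule subset_antisym)
    thus "P = cproj ?M" by (rule oproj_unique_range[OF P1 cp(1)])
  qed
  show "is_oproj (proj_Sup S)" "range (proj_Sup S) = ?M" using e cp by auto
qed


lemma bl_bclop: "bounded_linear f \<Longrightarrow> (\<And>c x. f (scaleC c x) = scaleC c (f x)) \<Longrightarrow> bounded_clinear_op f"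
  unfolding bounded_clinear_op_def
  using bounded_linear.bounded linear_add bounded_linear.linear by blast

lemma bclop_scaleC: "bounded_clinear_op f \<Longrightarrow> f (scaleC c x) = scaleC c (f x)"
  by (simp add: bounded_clinear_op_def)

lemma sa_diff: assumes A: "A \<in> selfadj_ops" and B: "B \<in> selfadj_ops"
  shows "(\<lambda>x. B x - A x) \<in> selfadj_ops"
proof -
  have "bounded_clinear_op (\<lambda>x. B x - A x)"
    apply (rule bl_bclop)
     apply (rule bounded_linear_sub[OF sa_bl[OF B] sa_bl[OF A]])
    by (simp add: bclop_scaleC[OF sa_bclop[OF A]] bclop_scaleC[OF sa_bclop[OF B]] scaleC_diff_right)
  moreover have "cinner (B x - A x) y = cinner x (B y - A y)" for x y
    by (simp add: cinner_diff_left cinner_diff_right sa_sym[OF A] sa_sym[OF B])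
  ultimately show ?thesis by (simp add: selfadj_ops_def)
qed

lemma bclop_comp: assumes A: "bounded_clinear_op A" and B: "bounded_clinear_op B"
  shows "bounded_clinear_op (A \<circ> B)"
proof -
  have "bounded_linear (\<lambda>x. A (B x))"
    by (rule bounded_linear_compose[OF bclop_bounded_linear[OF A] bclop_bounded_linear[OF B]])
  hence "bounded_linear (A \<circ> B)" by (simp add: comp_def)
  thus ?thesis by (rule bl_bclop) (simp add: bclop_scaleC[OF A] bclop_scaleC[OF B])
qed

lemma log_le_char:
  fixes A B :: "'a::chilbert_space \<Rightarrow> 'a"
  assumes A: "A \<in> selfadj_ops" and B: "B \<in> selfadj_ops"
  shows "log_le A B \<longleftrightarrow> (\<forall>x. A x = B (range_proj A x))"
proof
  let ?P = "range_proj A"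
  note pp = range_proj_props[OF A]
  assume "log_le A B"
  then obtain C where C: "C \<in> selfadj_ops" "C \<circ> A = (\<lambda>_. 0)" "B = (\<lambda>x. A x + C x)"
    unfolding log_le_def by blast
  have "range A \<subseteq> {x. C x = (\<lambda>_. 0) x}" using C(2) by (auto simp: fun_eq_iff)
  moreover have "closed {x. C x = (\<lambda>_. 0) x}"
    by (rule closed_eq_set[OF sa_bl[OF C(1)] bounded_linear_zero])
  ultimately have "closure (range A) \<subseteq> {x. C x = 0}" by (simp add: closure_minimal)
  hence "C (?P x) = 0" for x using pp(2) by blast
  thus "\<forall>x. A x = B (?P x)" using C(3) range_proj_comp[OF A] by simp
next
  let ?P = "range_proj A"
  assume h: "\<forall>x. A x = B (?P x)"
  define C where "C = (\<lambda>x. B x - A x)"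
  have "C \<in> selfadj_ops" unfolding C_def by (rule sa_diff[OF A B])
  moreover have "C \<circ> A = (\<lambda>_. 0)"
    unfolding C_def using h range_proj_comp(1)[OF A] by (auto simp: fun_eq_iff)
  moreover have "B = (\<lambda>x. A x + C x)" unfolding C_def by simp
  ultimately show "log_le A B" unfolding log_le_def by blast
qed

lemma commute_lemma:
  fixes B P :: "'a::chilbert_space \<Rightarrow> 'a"
  assumes B: "B \<in> selfadj_ops" and P: "is_oproj P" and inv: "\<And>x. B (P x) \<in> range P"
  shows "B (P x) = P (B x)"
proof (rule cinner_ext)
  fix y
  have fx: "P (B (P z)) = B (P z)" for z using inv oproj_range_fix[OF P] by blast
  note sP = sa_sym[OF oproj_sa[OF P]] and sB = sa_sym[OF B]
  have "cinner (P (B x)) y = cinner x (B (P y))" using sP sB by metis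
  also have "\<dots> = cinner x (P (B (P y)))" using fx by simp
  also have "\<dots> = cinner (P (B (P x))) y" using sP sB by metis
  also have "\<dots> = cinner (B (P x)) y" using fx by simp
  finally show "cinner (B (P x)) y = cinner (P (B x)) y" by simp
qed

lemma sa_comp_commute:
  fixes B P :: "'a::chilbert_space \<Rightarrow> 'a"
  assumes B: "B \<in> selfadj_ops" and P: "P \<in> selfadj_ops" and c: "\<And>x. B (P x) = P (B x)"
  shows "B \<circ> P \<in> selfadj_ops"
proof -
  have "cinner (B (P x)) y = cinner x (B (P y))" for x y
    using sa_sym[OF B] sa_sym[OF P] c by metis
  thus ?thesis using bclop_comp[OF sa_bclop[OF B] sa_bclop[OF P]] by (simp add: selfadj_ops_def)
qed


lemma log_le_intro:
  fixes G A :: "'a::chilbert_space \<Rightarrow> 'a"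
  assumes G: "G \<in> selfadj_ops" and A: "A \<in> selfadj_ops" and h: "\<And>x. A (G x) = G (G x)"
  shows "log_le G A"
  unfolding log_le_def
  by (rule bexI[of _ "\<lambda>x. A x - G x"]) (auto simp: fun_eq_iff h intro: sa_diff[OF G A])

theorem theorem1:
  fixes T :: "('a::chilbert_space \<Rightarrow> 'a) set" and B :: "'a \<Rightarrow> 'a"
  assumes "T \<subseteq> selfadj_ops" and "T \<noteq> {}"
    and "B \<in> selfadj_ops" and "\<forall>A\<in>T. log_le A B"
  shows "B \<circ> proj_Inf (range_proj ` T) \<in> selfadj_ops
       \<and> B \<circ> proj_Sup (range_proj ` T) \<in> selfadj_ops
       \<and> is_log_glb T (B \<circ> proj_Inf (range_proj ` T))
       \<and> is_log_lub T (B \<circ> proj_Sup (range_proj ` T))"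
proof -
  note TS = assms(1) and Bsa = assms(3)
  have saT: "A \<in> selfadj_ops" if "A \<in> T" for A using that TS by blast
  have opT: "\<forall>Q\<in>range_proj ` T. is_oproj Q" using range_proj_props(1) saT by blast
  have hA: "A x = B (range_proj A x)" if "A \<in> T" for A x
    using log_le_char[OF saT[OF that] Bsa] assms(4) that by blast
  have comm: "B (range_proj A x) = range_proj A (B x)" if "A \<in> T" for A x
  proof (rule cinner_ext)
    fix y
    note sP = sa_sym[OF oproj_sa[OF range_proj_props(1)[OF saT[OF that]]]]
    have "cinner (B (range_proj A x)) y = cinner (A x) y" using hA[OF that] by simp
    also have "\<dots> = cinner x (A y)" using sa_sym[OF saT[OF that]] by simp
    also have "\<dots> = cinner x (B (range_proj A y))" using hA[OF that] by simp
    also have "\<dots> = cinner (range_proj A (B x)) y" using sa_sym[OF Bsa] sP by metis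
    finally show "cinner (B (range_proj A x)) y = cinner (range_proj A (B x)) y" .
  qed
  define P where "P = proj_Inf (range_proj ` T)"
  define Q where "Q = proj_Sup (range_proj ` T)"
  have Pop: "is_oproj P" and rP: "range P = (\<Inter>A\<in>T. range (range_proj A))"
    using proj_Inf_props[OF opT] unfolding P_def by auto
  have Qop: "is_oproj Q" and rQ: "range Q = \<Inter>{N. csub N \<and> closed N \<and> (\<forall>R\<in>range_proj ` T. range R \<subseteq> N)}"
    using proj_Sup_props[OF opT] unfolding Q_def by auto
  have PA_Q: "range (range_proj A) \<subseteq> range Q" if "A \<in> T" for A
    using rQ that by auto
  have Q_min: "range Q \<subseteq> N" if "csub N" "closed N" "\<And>A. A \<in> T \<Longrightarrow> range (range_proj A) \<subseteq> N" for N
    using rQ that by auto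
  have fixPA: "range_proj A z = z" if "A \<in> T" "z \<in> range (range_proj A)" for A z
    using oproj_range_fix[OF range_proj_props(1)[OF saT[OF that(1)]]] that(2) by blast
  have invP: "B (P x) \<in> range P" for x
  proof -
    have "B (P x) \<in> range (range_proj A)" if "A \<in> T" for A
    proof -
      have "P x \<in> range (range_proj A)" using rP that by blast
      hence "B (P x) = range_proj A (B (P x))" using comm[OF that] fixPA[OF that] by metis
      thus ?thesis by (metis rangeI)
    qed
    thus ?thesis using rP by blast
  qed
  have invQ: "B (Q x) \<in> range Q" for x
  proof -
    let ?N = "{z. B z \<in> range Q}"
    have "range Q \<subseteq> ?N"
    proof (rule Q_min)
      show "csub ?N" by (rule csub_vimage[OF sa_bclop[OF Bsa] oproj_csub[OF Qop]])
      show "closed ?N" by (rule closed_vimage_bl[OF sa_bl[OF Bsa] oproj_range_closed[OF Qop]])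
      fix A assume A: "A \<in> T"
      show "range (range_proj A) \<subseteq> ?N"
      proof
        fix z assume z: "z \<in> range (range_proj A)"
        have "B z = range_proj A (B z)" using comm[OF A, of z] fixPA[OF A z] by simp
        hence "B z \<in> range (range_proj A)" by (metis rangeI)
        thus "z \<in> ?N" using PA_Q[OF A] by auto
      qed
    qed
    thus ?thesis by auto
  qed
  have cP: "B (P x) = P (B x)" for x by (rule commute_lemma[OF Bsa Pop invP])
  have cQ: "B (Q x) = Q (B x)" for x by (rule commute_lemma[OF Bsa Qop invQ])
  have Gsa: "B \<circ> P \<in> selfadj_ops" by (rule sa_comp_commute[OF Bsa oproj_sa[OF Pop] cP])
  have Usa: "B \<circ> Q \<in> selfadj_ops" by (rule sa_comp_commute[OF Bsa oproj_sa[OF Qop] cQ])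
  have PPA: "range_proj A (P x) = P x" if "A \<in> T" for A x
    using fixPA[OF that] rP that by blast
  have QPA: "Q (range_proj A x) = range_proj A x" if "A \<in> T" for A x
    using PA_Q[OF that] oproj_range_fix[OF Qop] by blast
  have glb: "is_log_glb T (B \<circ> P)"
    unfolding is_log_glb_def
  proof (intro conjI ballI impI)
    show "B \<circ> P \<in> selfadj_ops" by (rule Gsa)
  next
    fix A assume A: "A \<in> T"
    show "log_le (B \<circ> P) A"
    proof (rule log_le_intro[OF Gsa saT[OF A]])
      fix x
      have "A ((B \<circ> P) x) = B (B (range_proj A (P x)))" using hA[OF A] comm[OF A] by simp
      also have "\<dots> = B (B (P x))" using PPA[OF A] by simp
      also have "\<dots> = (B \<circ> P) ((B \<circ> P) x)" using cP oproj_idem[OF Pop] by simp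
      finally show "A ((B \<circ> P) x) = (B \<circ> P) ((B \<circ> P) x)" .
    qed
  next
    fix L assume L: "L \<in> selfadj_ops" and lb: "\<forall>A\<in>T. log_le L A"
    let ?PL = "range_proj L"
    have hL: "L x = A (?PL x)" if "A \<in> T" for A x
      using log_le_char[OF L saT[OF that]] lb that by blast
    have subPL: "range ?PL \<subseteq> range (range_proj A)" if A: "A \<in> T" for A
    proof -
      have "range L \<subseteq> range A" using hL[OF A] by (metis image_subsetI rangeI)
      hence "closure (range L) \<subseteq> closure (range A)" by (rule closure_mono)
      thus ?thesis using range_proj_props(2)[OF L] range_proj_props(2)[OF saT[OF A]] by simp
    qed
    have inP: "?PL x \<in> range P" for x
    proof -
      have "?PL x \<in> (\<Inter>A\<in>T. range (range_proj A))" using subPL by blast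
      thus ?thesis using rP by simp
    qed
    have inPA: "?PL x \<in> range (range_proj A)" if "A \<in> T" for A x
      using subPL[OF that] by blast
    have Pfix: "P (?PL x) = ?PL x" for x using inP oproj_range_fix[OF Pop] by blast
    obtain A0 where A0: "A0 \<in> T" using assms(2) by blast
    have "L x = (B \<circ> P) (?PL x)" for x
    proof -
      have "L x = B (range_proj A0 (?PL x))" using hL[OF A0] hA[OF A0] by simp
      also have "\<dots> = B (?PL x)" using fixPA[OF A0 inPA[OF A0]] by simp
      also have "\<dots> = B (P (?PL x))" using Pfix by simp
      finally show ?thesis by simp
    qed
    thus "log_le L (B \<circ> P)" using log_le_char[OF L Gsa] by blast
  qed
  have lub: "is_log_lub T (B \<circ> Q)"
    unfolding is_log_lub_def
  proof (intro conjI ballI impI)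
    show "B \<circ> Q \<in> selfadj_ops" by (rule Usa)
  next
    fix A assume A: "A \<in> T"
    have "A x = (B \<circ> Q) (range_proj A x)" for x using hA[OF A] QPA[OF A] by simp
    thus "log_le A (B \<circ> Q)" using log_le_char[OF saT[OF A] Usa] by blast
  next
    fix L assume L: "L \<in> selfadj_ops" and ub: "\<forall>A\<in>T. log_le A L"
    let ?U = "B \<circ> Q"
    let ?PU = "range_proj ?U"
    let ?N = "{x. L x = B x}"
    have "range Q \<subseteq> ?N"
    proof (rule Q_min)
      show "csub ?N" by (rule csub_eq_set[OF sa_bclop[OF L] sa_bclop[OF Bsa]])
      show "closed ?N" by (rule closed_eq_set[OF sa_bl[OF L] sa_bl[OF Bsa]])
      fix A assume A: "A \<in> T"
      have "A x = L (range_proj A x)" for x using log_le_char[OF saT[OF A] L] ub A by blast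
      thus "range (range_proj A) \<subseteq> ?N" using hA[OF A] by auto
    qed
    hence LB: "L z = B z" if "z \<in> range Q" for z using that by blast
    have "range ?U \<subseteq> range Q" using cQ by auto
    hence "closure (range ?U) \<subseteq> range Q" using oproj_range_closed[OF Qop] by (simp add: closure_minimal)
    hence inQ: "?PU x \<in> range Q" for x using range_proj_props(2)[OF Usa] by blast
    have "?U x = L (?PU x)" for x
    proof -
      have "?U x = ?U (?PU x)" using range_proj_comp(2)[OF Usa] by metis
      also have "\<dots> = B (?PU x)" using inQ oproj_range_fix[OF Qop] by simp
      also have "\<dots> = L (?PU x)" using LB[OF inQ] by simp
      finally show ?thesis .
    qed
    thus "log_le ?U L" using log_le_char[OF Usa L] by blast
  qed
  show ?thesis using Gsa Usa glb lub unfolding P_def Q_def by blast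
qed

end
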